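(* Let $\mathscr Q_n$ be a non-singular quadric in $\mathrm{PG}(n,2)$ of projective index $g\geq1$, and for $0\le s<g$ let $\Gamma_s$ be the graph constructed from an $s$-dimensional subspace $\alpha_s$ contained in $\mathscr Q_n$ as described below. Then the graphs $\Gamma_0,\Gamma_1,\ldots,\Gamma_{g-1}$ are pairwise non-isomorphic.
   Context: A non-singular quadric $\mathscr Q_n$ in $\mathrm{PG}(n,2)$ is the point set of a non-degenerate quadric; its projective index $g$ is the largest dimension of a projective subspace contained in $\mathscr Q_n$. The point-graph $\Gamma$ has vertex set the points of $\mathscr Q_n$, two distinct points adjacent iff the line joining them is contained in $\mathscr Q_n$. For $0\le s<g$ and an $s$-dimensional subspace $\alpha_s\subseteq\mathscr Q_n$: a point $X$ of $\mathscr Q_n$ has type (i) if $X\in\alpha_s$; type (ii) if $X\notin\alpha_s$ and $\langle\alpha_s,X\rangle\subseteq\mathscr Q_n$; type (iii) otherwise. Let $\mathcal X_s$ be the type (ii) points and $\mathcal Y_s$ the points of type (i) or (iii). The graph $\Gamma_s$ has the same vertex set as $\Gamma$ and the same edges, except that for each vertex $R\in\mathcal Y_s$ having exactly $\frac12|\mathcal X_s|$ neighbours in $\mathcal X_s$ (in $\Gamma$), those edges are deleted and $R$ is joined instead to the other $\frac12|\mathcal X_s|$ vertices of $\mathcal X_s$. *)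

theory Defs
  imports Main "HOL-Library.Z2"
begin

text \<open>Vectors of GF(2)^(n+1), coordinates 0..n; GF(2) is the field bit.
  Each point of PG(n,2) is represented by its unique nonzero vector.\<close>

definition vecs :: "nat \<Rightarrow> (nat \<Rightarrow> bit) set" where
  "vecs n = {x. \<forall>i>n. x i = 0}"

definition zerov :: "nat \<Rightarrow> bit" where
  "zerov = (\<lambda>i. 0)"

definition vadd :: "(nat \<Rightarrow> bit) \<Rightarrow> (nat \<Rightarrow> bit) \<Rightarrow> (nat \<Rightarrow> bit)" where
  "vadd x y = (\<lambda>i. x i + y i)"

definition qform :: "nat \<Rightarrow> (nat \<Rightarrow> nat \<Rightarrow> bit) \<Rightarrow> (nat \<Rightarrow> bit) \<Rightarrow> bit" where
  "qform n a x = (\<Sum>i\<le>n. \<Sum>j\<in>{i..n}. a i j * x i * x j)"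

definition polar :: "nat \<Rightarrow> (nat \<Rightarrow> nat \<Rightarrow> bit) \<Rightarrow> (nat \<Rightarrow> bit) \<Rightarrow> (nat \<Rightarrow> bit) \<Rightarrow> bit" where
  "polar n a x y = qform n a (vadd x y) - qform n a x - qform n a y"

definition nonsingular :: "nat \<Rightarrow> (nat \<Rightarrow> nat \<Rightarrow> bit) \<Rightarrow> bool" where
  "nonsingular n a \<longleftrightarrow>
     (\<forall>x\<in>vecs n. x \<noteq> zerov \<and> qform n a x = 0 \<longrightarrow> (\<exists>y\<in>vecs n. polar n a x y \<noteq> 0))"

definition quadric :: "nat \<Rightarrow> (nat \<Rightarrow> nat \<Rightarrow> bit) \<Rightarrow> (nat \<Rightarrow> bit) set" where
  "quadric n a = {x \<in> vecs n. x \<noteq> zerov \<and> qform n a x = 0}"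

text \<open>Linear subspaces of GF(2)^(n+1) (over GF(2): contain 0, closed under addition).\<close>
definition lin_subspace :: "nat \<Rightarrow> (nat \<Rightarrow> bit) set \<Rightarrow> bool" where
  "lin_subspace n W \<longleftrightarrow> W \<subseteq> vecs n \<and> zerov \<in> W \<and> (\<forall>x\<in>W. \<forall>y\<in>W. vadd x y \<in> W)"

text \<open>Projective s-dimensional subspace = point set of a linear subspace of
  vector dimension s+1, i.e. with 2^(s+1) vectors.\<close>
definition proj_subspace :: "nat \<Rightarrow> nat \<Rightarrow> (nat \<Rightarrow> bit) set \<Rightarrow> bool" where
  "proj_subspace n s S \<longleftrightarrow>
     (\<exists>W. lin_subspace n W \<and> card W = 2 ^ (s + 1) \<and> S = W - {zerov})"

definition lspan :: "nat \<Rightarrow> (nat \<Rightarrow> bit) set \<Rightarrow> (nat \<Rightarrow> bit) set" where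
  "lspan n S = \<Inter>{W. lin_subspace n W \<and> S \<subseteq> W}"

definition pjoin :: "nat \<Rightarrow> (nat \<Rightarrow> bit) set \<Rightarrow> (nat \<Rightarrow> bit) set" where
  "pjoin n S = lspan n S - {zerov}"

definition has_proj_index :: "nat \<Rightarrow> (nat \<Rightarrow> nat \<Rightarrow> bit) \<Rightarrow> nat \<Rightarrow> bool" where
  "has_proj_index n a g \<longleftrightarrow>
     (\<exists>S. proj_subspace n g S \<and> S \<subseteq> quadric n a) \<and>
     (\<forall>h S. proj_subspace n h S \<and> S \<subseteq> quadric n a \<longrightarrow> h \<le> g)"

definition qadj :: "nat \<Rightarrow> (nat \<Rightarrow> nat \<Rightarrow> bit) \<Rightarrow> (nat \<Rightarrow> bit) \<Rightarrow> (nat \<Rightarrow> bit) \<Rightarrow> bool" where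
  "qadj n a P Q \<longleftrightarrow> P \<in> quadric n a \<and> Q \<in> quadric n a \<and> P \<noteq> Q \<and> pjoin n {P, Q} \<subseteq> quadric n a"

text \<open>Type (ii) points w.r.t. alpha, and the rest (types (i),(iii)).\<close>
definition typeX :: "nat \<Rightarrow> (nat \<Rightarrow> nat \<Rightarrow> bit) \<Rightarrow> (nat \<Rightarrow> bit) set \<Rightarrow> (nat \<Rightarrow> bit) set" where
  "typeX n a \<alpha> = {X \<in> quadric n a. X \<notin> \<alpha> \<and> pjoin n (\<alpha> \<union> {X}) \<subseteq> quadric n a}"

definition typeY :: "nat \<Rightarrow> (nat \<Rightarrow> nat \<Rightarrow> bit) \<Rightarrow> (nat \<Rightarrow> bit) set \<Rightarrow> (nat \<Rightarrow> bit) set" where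
  "typeY n a \<alpha> = quadric n a - typeX n a \<alpha>"

definition switched :: "nat \<Rightarrow> (nat \<Rightarrow> nat \<Rightarrow> bit) \<Rightarrow> (nat \<Rightarrow> bit) set \<Rightarrow> (nat \<Rightarrow> bit) \<Rightarrow> bool" where
  "switched n a \<alpha> R \<longleftrightarrow> R \<in> typeY n a \<alpha> \<and>
     2 * card {Z \<in> typeX n a \<alpha>. qadj n a R Z} = card (typeX n a \<alpha>)"

definition gamma_adj :: "nat \<Rightarrow> (nat \<Rightarrow> nat \<Rightarrow> bit) \<Rightarrow> (nat \<Rightarrow> bit) set \<Rightarrow> (nat \<Rightarrow> bit) \<Rightarrow> (nat \<Rightarrow> bit) \<Rightarrow> bool" where
  "gamma_adj n a \<alpha> P Q \<longleftrightarrow>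
     (if (switched n a \<alpha> P \<and> Q \<in> typeX n a \<alpha>) \<or> (switched n a \<alpha> Q \<and> P \<in> typeX n a \<alpha>)
      then P \<in> quadric n a \<and> Q \<in> quadric n a \<and> \<not> qadj n a P Q
      else qadj n a P Q)"

definition graph_iso :: "'a set \<Rightarrow> ('a \<Rightarrow> 'a \<Rightarrow> bool) \<Rightarrow> 'b set \<Rightarrow> ('b \<Rightarrow> 'b \<Rightarrow> bool) \<Rightarrow> bool" where
  "graph_iso V1 E1 V2 E2 \<longleftrightarrow>
     (\<exists>f. bij_betw f V1 V2 \<and> (\<forall>x\<in>V1. \<forall>y\<in>V1. E1 x y \<longleftrightarrow> E2 (f x) (f y)))"

end

theory Submission
  imports Defs "HOL-Library.Function_Algebras" "HOL-Library.FuncSet"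
begin

declare add_bit_eq_xor[simp del] mult_bit_eq_and[simp del]

lemma vadd_plus: "vadd x y = x + y" by (simp add: vadd_def plus_fun_def)
lemma zerov_0: "zerov = 0" by (simp add: zerov_def zero_fun_def)

lemma bit_add_self [simp]: "(b::bit) + b = 0" by (cases b) simp_all
lemma fun_add_self [simp]: "(x::nat\<Rightarrow>bit) + x = 0" by (simp add: fun_eq_iff)
lemma fun_add_cancel_left [simp]: "(x::nat\<Rightarrow>bit) + (x + y) = y" by (simp add: add.assoc[symmetric])
lemma fun_add_cancel_right [simp]: "(y::nat\<Rightarrow>bit) + x + x = y" by (simp add: add.assoc)
lemma fun_add_eq_0_iff: "((x::nat\<Rightarrow>bit) + y = 0) = (x = y)"
  by (metis add.right_neutral fun_add_cancel_left fun_add_self)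

lemma polar_expand:
  "polar n a x y = (\<Sum>i\<le>n. \<Sum>j\<in>{i..n}. a i j * (x i * y j + y i * x j))"
proof -
  have "qform n a (vadd x y) = qform n a x + qform n a y + (\<Sum>i\<le>n. \<Sum>j\<in>{i..n}. a i j * (x i * y j + y i * x j))"
    unfolding qform_def vadd_def by (simp add: sum.distrib[symmetric] algebra_simps)
  then show ?thesis unfolding polar_def by (simp add: algebra_simps)
qed

lemma polar_add_left: "polar n a (x + y) z = polar n a x z + polar n a y z"
  by (simp add: polar_expand sum.distrib[symmetric] algebra_simps)
lemma polar_comm: "polar n a x y = polar n a y x"
  by (simp add: polar_expand algebra_simps)
lemma polar_add_right: "polar n a z (x + y) = polar n a z x + polar n a z y"
  by (metis polar_add_left polar_comm)
lemma polar_self [simp]: "polar n a x x = 0"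
  by (simp add: polar_expand flip: mult_2) 
lemma polar_zero [simp]: "polar n a 0 x = 0" "polar n a x 0 = 0"
  by (simp_all add: polar_expand)
lemma qform_add: "qform n a (x + y) = qform n a x + qform n a y + polar n a x y"
  by (simp add: polar_def vadd_plus)
lemma qform_zero [simp]: "qform n a 0 = 0" by (simp add: qform_def)

lemma UNIV_bit: "(UNIV::bit set) = {0,1}" by (auto intro: bit.exhaust)

lemma vecs_add [intro]: "x \<in> vecs n \<Longrightarrow> y \<in> vecs n \<Longrightarrow> x + y \<in> vecs n"
  by (simp add: vecs_def)
lemma vecs_0 [simp,intro]: "0 \<in> vecs n" by (simp add: vecs_def)

lemma finite_vecs: "finite (vecs n)"
proof -
  have "vecs n \<subseteq> (\<lambda>f i. if i \<le> n then f i else 0) ` ({..n} \<rightarrow>\<^sub>E (UNIV::bit set))"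
  proof
    fix x assume "x \<in> vecs n"
    then have "x = (\<lambda>i. if i \<le> n then restrict x {..n} i else 0)"
      by (auto simp: vecs_def fun_eq_iff)
    then show "x \<in> (\<lambda>f i. if i \<le> n then f i else 0) ` ({..n} \<rightarrow>\<^sub>E (UNIV::bit set))"
      by (intro image_eqI[where x="restrict x {..n}"]) auto
  qed
  moreover have "finite ({..n} \<rightarrow>\<^sub>E (UNIV::bit set))"
    by (intro finite_PiE) (auto simp: UNIV_bit)
  ultimately show ?thesis by (meson finite_imageI finite_subset)
qed

lemma lin_subspaceI:
  "W \<subseteq> vecs n \<Longrightarrow> 0 \<in> W \<Longrightarrow> (\<And>x y. x \<in> W \<Longrightarrow> y \<in> W \<Longrightarrow> x + y \<in> W) \<Longrightarrow> lin_subspace n W"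
  by (simp add: lin_subspace_def zerov_0 vadd_plus)
lemma lin_subspaceD:
  assumes "lin_subspace n W"
  shows "W \<subseteq> vecs n" "0 \<in> W" "x \<in> W \<Longrightarrow> y \<in> W \<Longrightarrow> x + y \<in> W"
  using assms by (auto simp: lin_subspace_def zerov_0 vadd_plus)

lemma lspan_least: "lin_subspace n W \<Longrightarrow> S \<subseteq> W \<Longrightarrow> lspan n S \<subseteq> W"
  unfolding lspan_def by blast
lemma lspan_mem: "x \<in> lspan n S \<Longrightarrow> lin_subspace n W \<Longrightarrow> S \<subseteq> W \<Longrightarrow> x \<in> W"
  unfolding lspan_def by blast

lemma pjoin_pair:
  assumes "P \<in> vecs n" "Q \<in> vecs n"
  shows "pjoin n {P, Q} = {P, Q, P + Q} - {0}"
proof -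
  have sub: "lin_subspace n {0, P, Q, P + Q}"
    by (rule lin_subspaceI) (use assms in \<open>auto simp: add.commute add.left_commute\<close>)
  have "lspan n {P,Q} = {0, P, Q, P + Q}"
  proof
    show "lspan n {P, Q} \<subseteq> {0, P, Q, P + Q}" by (rule lspan_least[OF sub]) auto
    show "{0, P, Q, P + Q} \<subseteq> lspan n {P, Q}"
      unfolding lspan_def by (auto dest: lin_subspaceD)
  qed
  then show ?thesis by (auto simp: pjoin_def zerov_0)
qed

lemma pjoin_ext:
  assumes W: "lin_subspace n W" and x: "x \<in> vecs n"
  shows "pjoin n ((W - {0}) \<union> {x}) = (W \<union> ((+) x ` W)) - {0}"
proof -
  have WV: "W \<subseteq> vecs n" and W0: "0 \<in> W" and Wadd: "\<And>u v. u \<in> W \<Longrightarrow> v \<in> W \<Longrightarrow> u + v \<in> W"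
    using lin_subspaceD[OF W] by auto
  have sub: "lin_subspace n (W \<union> ((+) x ` W))"
  proof (rule lin_subspaceI)
    show "W \<union> (+) x ` W \<subseteq> vecs n" using WV x by auto
    show "0 \<in> W \<union> (+) x ` W" using W0 by auto
    fix u v assume "u \<in> W \<union> (+) x ` W" "v \<in> W \<union> (+) x ` W"
    then show "u + v \<in> W \<union> (+) x ` W"
      apply (elim UnE imageE)
      subgoal using Wadd by blast
      subgoal for v' by (rule UnI2, rule image_eqI[where x="u+v'"]) (auto simp: Wadd algebra_simps)
      subgoal for u' by (rule UnI2, rule image_eqI[where x="u'+v"]) (auto simp: Wadd algebra_simps)
      subgoal for u' v' by (rule UnI1) (simp add: Wadd add.assoc add.left_commute[of x] flip: add.assoc[of x x])
      done
  qed
  have "lspan n ((W - {0}) \<union> {x}) = W \<union> ((+) x ` W)"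
  proof
    show "lspan n (W - {0} \<union> {x}) \<subseteq> W \<union> (+) x ` W"
      by (rule lspan_least[OF sub]) (use W0 in force)
    show "W \<union> (+) x ` W \<subseteq> lspan n (W - {0} \<union> {x})"
    proof
      fix y assume y: "y \<in> W \<union> (+) x ` W"
      show "y \<in> lspan n (W - {0} \<union> {x})"
        unfolding lspan_def
      proof
        fix U assume "U \<in> {U. lin_subspace n U \<and> W - {0} \<union> {x} \<subseteq> U}"
        then have U: "lin_subspace n U" "W - {0} \<subseteq> U" "x \<in> U" by auto
        have WU: "W \<subseteq> U" using U(2) lin_subspaceD(2)[OF U(1)] by blast
        show "y \<in> U" using y WU U(3) lin_subspaceD(3)[OF U(1)] by blast
      qed
    qed
  qed
  then show ?thesis by (simp add: pjoin_def zerov_0)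
qed

lemma quadric_iff: "x \<in> quadric n a \<longleftrightarrow> x \<in> vecs n \<and> x \<noteq> 0 \<and> qform n a x = 0"
  by (simp add: quadric_def zerov_0)

lemma qadj_iff:
  "qadj n a P Q \<longleftrightarrow> P \<in> quadric n a \<and> Q \<in> quadric n a \<and> P \<noteq> Q \<and> polar n a P Q = 0"
proof (cases "P \<in> quadric n a \<and> Q \<in> quadric n a \<and> P \<noteq> Q")
  case True
  then have PV: "P \<in> vecs n" "Q \<in> vecs n" and PQ: "P + Q \<noteq> 0"
    by (auto simp: quadric_iff fun_add_eq_0_iff)
  have "pjoin n {P, Q} \<subseteq> quadric n a \<longleftrightarrow> P + Q \<in> quadric n a"
    using True by (auto simp: pjoin_pair[OF PV] PQ)
  also have "\<dots> \<longleftrightarrow> polar n a P Q = 0"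
    using True PQ by (auto simp: quadric_iff qform_add)
  finally show ?thesis using True by (simp add: qadj_def)
qed (auto simp: qadj_def)




locale flag =
  fixes n :: nat and a :: "nat \<Rightarrow> nat \<Rightarrow> bit" and W :: "(nat \<Rightarrow> bit) set" and s :: nat
  assumes ns: "nonsingular n a" and lin: "lin_subspace n W" and cardW: "card W = 2 ^ (s + 1)"
    and tsW: "W - {0} \<subseteq> quadric n a"
begin

abbreviation "Qd \<equiv> quadric n a"
abbreviation "B \<equiv> polar n a"
abbreviation "X \<equiv> typeX n a (W - {0})"
definition "Z = {z \<in> Qd. \<exists>w\<in>W. B z w = 1}"

lemma WV: "W \<subseteq> vecs n" and W0: "0 \<in> W" and Wadd: "u \<in> W \<Longrightarrow> v \<in> W \<Longrightarrow> u + v \<in> W"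
  using lin_subspaceD[OF lin] by auto

lemma finW: "finite W" using WV finite_vecs finite_subset by blast

lemma W_q: "w \<in> W \<Longrightarrow> qform n a w = 0"
  using tsW by (cases "w = 0") (auto simp: quadric_iff)

lemma W_B: "w \<in> W \<Longrightarrow> w' \<in> W \<Longrightarrow> B w w' = 0"
  using W_q[of "w+w'"] W_q[of w] W_q[of w'] Wadd[of w w'] by (simp add: qform_add)

lemma X_iff: "x \<in> X \<longleftrightarrow> x \<in> Qd \<and> x \<notin> W \<and> (\<forall>w\<in>W. B x w = 0)"
proof (cases "x \<in> Qd \<and> x \<notin> W")
  case True
  then have xV: "x \<in> vecs n" and x0: "x \<noteq> 0" by (auto simp: quadric_iff)
  have xw: "x + w \<noteq> 0" if "w \<in> W" for w using True that by (auto simp: fun_add_eq_0_iff)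
  have "pjoin n ((W - {0}) \<union> {x}) \<subseteq> Qd \<longleftrightarrow> (\<forall>w\<in>W. x + w \<in> Qd)"
    unfolding pjoin_ext[OF lin xV] using tsW xw by auto
  also have "\<dots> \<longleftrightarrow> (\<forall>w\<in>W. B x w = 0)"
    using True xw WV xV by (auto simp: quadric_iff qform_add W_q)
  finally show ?thesis using True by (auto simp: typeX_def zerov_0)
next
  case False
  then show ?thesis using W0 by (auto simp: typeX_def zerov_0 quadric_iff)
qed

lemma Qd_cases:
  assumes "p \<in> Qd"
  obtains (A) "p \<in> W" "p \<notin> X" "p \<notin> Z" | (X) "p \<in> X" "p \<notin> W" "p \<notin> Z" | (Z) "p \<in> Z" "p \<notin> W" "p \<notin> X"
proof -
  consider "p \<in> W" | "p \<notin> W" "\<forall>w\<in>W. B p w = 0" | "p \<notin> W" "\<exists>w\<in>W. B p w = 1"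
    by (metis bit_not_zero_iff)
  then show ?thesis
  proof cases
    case 1 then show ?thesis using A W_B by (auto simp: X_iff Z_def)
  next
    case 2 then show ?thesis using X assms by (auto simp: X_iff Z_def)
  next
    case 3 then show ?thesis using Z assms by (auto simp: X_iff Z_def)
  qed
qed

lemma finQ: "finite Qd" using finite_vecs by (rule finite_subset[rotated]) (auto simp: quadric_iff)
lemma finX: "finite X" using finQ by (rule finite_subset[rotated]) (auto simp: X_iff)

lemma Z_half: assumes R: "R \<in> Z" shows "2 * card {x \<in> X. qadj n a R x} = card X"
proof -
  obtain w0 where w0: "w0 \<in> W" "B R w0 = 1" using R by (auto simp: Z_def)
  have RQ: "R \<in> Qd" using R by (auto simp: Z_def)
  define X1 where "X1 = {x \<in> X. qadj n a R x}"
  define X2 where "X2 = {x \<in> X. \<not> qadj n a R x}"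
  have RX: "R \<notin> X" using R by (auto simp: X_iff Z_def)
  have X1: "X1 = {x \<in> X. B R x = 0}" unfolding X1_def using RQ RX by (auto simp: qadj_iff X_iff)
  have X2: "X2 = {x \<in> X. B R x = 1}" unfolding X2_def using RQ RX by (auto simp: qadj_iff X_iff)
  have shiftX: "x + w0 \<in> X" if "x \<in> X" for x
  proof -
    have xw: "x + w0 \<noteq> 0" using that w0 by (auto simp: X_iff fun_add_eq_0_iff)
    have "x + w0 \<notin> W" using that w0 Wadd[of "x+w0" w0] by (auto simp: X_iff add.assoc)
    moreover have "x + w0 \<in> Qd" using that w0 xw WV
      by (auto simp: X_iff quadric_iff qform_add W_q)
    moreover have "\<forall>w\<in>W. B (x + w0) w = 0" using that w0 W_B by (auto simp: X_iff polar_add_left)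
    ultimately show ?thesis by (simp add: X_iff)
  qed
  have "bij_betw (\<lambda>x. x + w0) X1 X2"
  proof (rule bij_betwI[where g="\<lambda>x. x + w0"])
    show "(\<lambda>x. x + w0) \<in> X1 \<rightarrow> X2" using shiftX w0
      by (auto simp: X1 X2 polar_add_right polar_comm)
    show "(\<lambda>x. x + w0) \<in> X2 \<rightarrow> X1" using shiftX w0
      by (auto simp: X1 X2 polar_add_right bit_add_self)
  qed auto
  then have "card X1 = card X2" by (rule bij_betw_same_card)
  moreover have "X = X1 \<union> X2" "X1 \<inter> X2 = {}" by (auto simp: X1_def X2_def)
  moreover have "finite X1" "finite X2" using finX by (auto simp: X1_def X2_def)
  ultimately have "card X = card X1 + card X1" by (simp add: card_Un_disjoint)
  then show ?thesis by (simp add: X1_def)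
qed

lemma switched_iff: assumes "X \<noteq> {}" shows "switched n a (W - {0}) R \<longleftrightarrow> R \<in> Z"
proof
  assume sw: "switched n a (W - {0}) R"
  then have RQ: "R \<in> Qd" "R \<notin> X" by (auto simp: switched_def typeY_def)
  from RQ(1) show "R \<in> Z"
  proof (cases rule: Qd_cases)
    case A
    then have "R \<noteq> 0" using RQ by (auto simp: quadric_iff)
    have "{x \<in> X. qadj n a R x} = X" using A RQ W_B
      by (auto simp: qadj_iff X_iff polar_comm)
    then have "card X = 0" using sw by (simp add: switched_def)
    then show ?thesis using assms finX by simp
  qed (use RQ in auto)
next
  assume "R \<in> Z"
  then show "switched n a (W - {0}) R"
    using Z_half by (auto simp: switched_def typeY_def Z_def X_iff)
qed

lemma gadj:
  assumes "X \<noteq> {}" "P \<in> Qd" "Q \<in> Qd"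
  shows "gamma_adj n a (W - {0}) P Q \<longleftrightarrow> ((P \<noteq> Q \<and> B P Q = 0) \<noteq> ((P \<in> Z \<and> Q \<in> X) \<or> (P \<in> X \<and> Q \<in> Z)))"
proof -
  have d: "P \<noteq> Q" if "(P \<in> Z \<and> Q \<in> X) \<or> (P \<in> X \<and> Q \<in> Z)"
    using that by (auto simp: X_iff Z_def)
  show ?thesis unfolding gamma_adj_def switched_iff[OF assms(1)] qadj_iff using assms d by auto
qed

end




lemma add_pair_cancel: "(x + u) + (x + v) = u + (v::nat\<Rightarrow>bit)"
  by (simp add: add.assoc add.left_commute[of x] flip: add.assoc[of x x])

lemma ts_q: "lin_subspace n U \<Longrightarrow> U - {0} \<subseteq> quadric n a \<Longrightarrow> u \<in> U \<Longrightarrow> qform n a u = 0"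
  by (cases "u = 0") (auto simp: quadric_iff)
lemma ts_B: assumes "lin_subspace n U" "U - {0} \<subseteq> quadric n a" "u \<in> U" "v \<in> U"
  shows "polar n a u v = 0"
  using ts_q[OF assms(1,2), of "u+v"] ts_q[OF assms(1,2), of u] ts_q[OF assms(1,2), of v]
    lin_subspaceD(3)[OF assms(1) assms(3,4)] assms by (simp add: qform_add)

definition ext0 :: "(nat \<Rightarrow> bit) set \<Rightarrow> ((nat \<Rightarrow> bit) \<Rightarrow> bit) \<Rightarrow> bool" where
  "ext0 W f \<longleftrightarrow> (\<forall>x. x \<notin> W \<longrightarrow> f x = 0)"

definition funs :: "(nat \<Rightarrow> bit) set \<Rightarrow> (nat \<Rightarrow> bit) set \<Rightarrow> ((nat \<Rightarrow> bit) \<Rightarrow> bit) set" where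
  "funs W T = {f. ext0 W f \<and> (\<forall>x\<in>W. \<forall>y\<in>W. f (x + y) = f x + f y) \<and> (\<forall>x\<in>T. f x = 0)}"

lemma funsI: "ext0 W f \<Longrightarrow> (\<And>x y. x \<in> W \<Longrightarrow> y \<in> W \<Longrightarrow> f (x + y) = f x + f y) \<Longrightarrow> (\<And>x. x \<in> T \<Longrightarrow> f x = 0) \<Longrightarrow> f \<in> funs W T"
  unfolding funs_def by (rule CollectI) blast
lemma funsD: assumes "f \<in> funs W T"
  shows "ext0 W f" "x \<in> W \<Longrightarrow> y \<in> W \<Longrightarrow> f (x + y) = f x + f y" "z \<in> T \<Longrightarrow> f z = 0"
    "u \<notin> W \<Longrightarrow> f u = 0"
  using assms unfolding funs_def ext0_def by auto

lemma finite_funs: "finite W \<Longrightarrow> finite (funs W T)"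
proof -
  assume fW: "finite W"
  have "finite (W \<rightarrow>\<^sub>E (UNIV::bit set))" by (rule finite_PiE) (simp_all add: fW UNIV_bit)
  then have "finite ((\<lambda>g x. if x \<in> W then g x else 0) ` (W \<rightarrow>\<^sub>E (UNIV::bit set)))" by (rule finite_imageI)
  moreover have "funs W T \<subseteq> (\<lambda>g x. if x \<in> W then g x else 0) ` (W \<rightarrow>\<^sub>E (UNIV::bit set))"
  proof
    fix f assume f: "f \<in> funs W T"
    have "f = (\<lambda>x. if x \<in> W then restrict f W x else 0)"
      using funsD(4)[OF f] by (auto simp: fun_eq_iff)
    moreover have "restrict f W \<in> W \<rightarrow>\<^sub>E (UNIV::bit set)" by simp
    ultimately show "f \<in> (\<lambda>g x. if x \<in> W then g x else 0) ` (W \<rightarrow>\<^sub>E (UNIV::bit set))"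
      by (rule image_eqI)
  qed
  ultimately show ?thesis by (rule finite_subset[rotated])
qed

lemma funs_count:
  assumes finW: "finite W" and W0: "0 \<in> W" and Wadd: "\<And>x y. x \<in> W \<Longrightarrow> y \<in> W \<Longrightarrow> x + y \<in> W"
    and TW: "T \<subseteq> W" and T0: "0 \<in> T" and Tadd: "\<And>x y. x \<in> T \<Longrightarrow> y \<in> T \<Longrightarrow> x + y \<in> T"
  shows "card (funs W T) * card T \<le> card W"
  using TW T0 Tadd
proof (induct "card W - card T" arbitrary: T rule: less_induct)
  case less
  show ?case
  proof (cases "T = W")
    case True
    have "funs W T \<subseteq> {\<lambda>_. 0}"
    proof
      fix f assume f: "f \<in> funs W T"
      show "f \<in> {\<lambda>_. 0}"
      proof -
        have "f y = 0" for y
          using funsD(3,4)[OF f] True by (cases "y \<in> W") auto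
        then show ?thesis by auto
      qed
    qed
    then have "card (funs W T) \<le> card {\<lambda>_::nat\<Rightarrow>bit. (0::bit)}" by (rule card_mono[rotated]) simp
    then have "card (funs W T) \<le> 1" by simp
    then show ?thesis using True by simp
  next
    case False
    then obtain x where x: "x \<in> W" "x \<notin> T" using less.prems by blast
    define T2 where "T2 = T \<union> (+) x ` T"
    have finT: "finite T" using less.prems finW finite_subset by blast
    have disj: "T \<inter> (+) x ` T = {}"
    proof (rule ccontr)
      assume "T \<inter> (+) x ` T \<noteq> {}"
      then obtain t t' where "t \<in> T" "t' \<in> T" "t = x + t'" by auto
      then have "x = t + t'" by (simp add: add.assoc)
      then show False using x less.prems \<open>t \<in> T\<close> \<open>t' \<in> T\<close> by auto
    qed
    have cT2: "card T2 = 2 * card T"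
    proof -
      have "inj_on ((+) x) T" by (rule inj_onI) simp
      then have "card ((+) x ` T) = card T" by (rule card_image)
      then show ?thesis unfolding T2_def using disj finT by (simp add: card_Un_disjoint)
    qed
    have T2W: "T2 \<subseteq> W" unfolding T2_def using less.prems x Wadd by auto
    have T20: "0 \<in> T2" unfolding T2_def using less.prems by auto
    have T2add: "u + v \<in> T2" if "u \<in> T2" "v \<in> T2" for u v
      using that unfolding T2_def
      apply (elim UnE imageE)
      subgoal using less.prems by blast
      subgoal for v' apply (rule UnI2, rule image_eqI[where x="u+v'"]) by (simp add: add.left_commute) (use less.prems in blast)
      subgoal for u' apply (rule UnI2, rule image_eqI[where x="u'+v"]) by (simp add: add.assoc) (use less.prems in blast)
      subgoal for u' v' apply (rule UnI1) using less.prems(3)[of u' v'] by (simp add: add_pair_cancel)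
      done
    have cTpos: "card T > 0" using finT less.prems by (auto simp: card_gt_0_iff)
    have "card T2 \<le> card W" using T2W finW card_mono by blast
    then have "card W - card T2 < card W - card T" using cT2 cTpos by linarith
    then have IH: "card (funs W T2) * card T2 \<le> card W"
      using less.hyps T2W T20 T2add by blast
    define G where "G = {f \<in> funs W T. f x = 1}"
    have sub: "funs W T \<subseteq> funs W T2 \<union> G"
    proof
      fix f assume f: "f \<in> funs W T"
      show "f \<in> funs W T2 \<union> G"
      proof (cases "f x = 1")
        case True then show ?thesis using f by (simp add: G_def)
      next
        case False
        then have "f x = 0" by simp
        have "f y = 0" if "y \<in> T2" for y
        proof -
          from that consider "y \<in> T" | t where "t \<in> T" "y = x + t" by (auto simp: T2_def)
          then show ?thesis
          proof cases
            case 1 then show ?thesis using funsD(3)[OF f] by blast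
          next
            case 2 then show ?thesis using funsD(2,3)[OF f] x \<open>f x = 0\<close> less.prems(1) by auto
          qed
        qed
        then show ?thesis using f funsD[OF f] by (intro UnI1 funsI) auto
      qed
    qed
    have cG: "card G \<le> card (funs W T2)"
    proof (cases "G = {}")
      case False
      then obtain f1 where f1: "f1 \<in> G" by blast
      define h where "h f = (\<lambda>y. if y \<in> W then f y + f1 y else 0)" for f :: "(nat \<Rightarrow> bit) \<Rightarrow> bit"
      have "inj_on h G"
      proof
        fix f f' assume "f \<in> G" "f' \<in> G" "h f = h f'"
        then show "f = f'"
        proof -
          have "f y = f' y" for y
          proof (cases "y \<in> W")
            case True
            have "h f y = f y + f1 y" "h f' y = f' y + f1 y" using True by (simp_all add: h_def)
            then have "f y + f1 y = f' y + f1 y" using \<open>h f = h f'\<close> by simp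
            then show ?thesis by simp
          next
            case False
            then show ?thesis using \<open>f \<in> G\<close> \<open>f' \<in> G\<close> funsD(4) unfolding G_def by (metis (no_types, lifting) mem_Collect_eq)
          qed
          then show ?thesis by auto
        qed
      qed
      moreover have "h ` G \<subseteq> funs W T2"
      proof
        fix g assume "g \<in> h ` G"
        then obtain f where f: "f \<in> G" "g = h f" by auto
        have fG: "f \<in> funs W T" "f x = 1" and f1G: "f1 \<in> funs W T" "f1 x = 1" using f f1 by (auto simp: G_def)
        have add: "g (u + v) = g u + g v" if "u \<in> W" "v \<in> W" for u v
          using that Wadd funsD(2)[OF fG(1) that] funsD(2)[OF f1G(1) that] by (simp add: f h_def algebra_simps)
        have "g y = 0" if "y \<in> T2" for y
        proof -
          from that consider "y \<in> T" | t where "t \<in> T" "y = x + t" by (auto simp: T2_def)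
          then show ?thesis
          proof cases
            case 1 then show ?thesis using funsD(3)[OF fG(1)] funsD(3)[OF f1G(1)] less.prems(1) by (auto simp: f h_def)
          next
            case 2
            have tW: "t \<in> W" using 2 less.prems(1) by blast
            have "f (x + t) = f x + f t" "f1 (x + t) = f1 x + f1 t"
              using funsD(2)[OF fG(1) x(1) tW] funsD(2)[OF f1G(1) x(1) tW] by auto
            moreover have "f t = 0" "f1 t = 0" using funsD(3)[OF fG(1)] funsD(3)[OF f1G(1)] 2 by auto
            ultimately show ?thesis using 2 Wadd[OF x(1) tW] fG f1G by (simp add: f h_def)
          qed
        qed
        moreover have "ext0 W g" by (simp add: f h_def ext0_def)
        ultimately show "g \<in> funs W T2" using add by (intro funsI) auto
      qed
      ultimately show ?thesis using finite_funs[OF finW] card_inj_on_le by blast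
    qed simp
    have "card (funs W T) \<le> card (funs W T2) + card G"
    proof -
      have "finite (funs W T2 \<union> G)" using finite_funs[OF finW] by (simp add: G_def finite_funs[OF finW])
      then have "card (funs W T) \<le> card (funs W T2 \<union> G)" using sub by (rule card_mono)
      also have "\<dots> \<le> card (funs W T2) + card G" by (rule card_Un_le)
      finally show ?thesis .
    qed
    with cG have le2: "card (funs W T) \<le> 2 * card (funs W T2)" by simp
    have "card (funs W T) * card T \<le> card (funs W T2) * card T2"
      using mult_le_mono1[OF le2, of "card T"] cT2 by (simp add: ac_simps)
    with IH show ?thesis by simp
  qed
qed

context flag
begin

lemma X_nonempty:
  assumes U: "lin_subspace n U" "U - {0} \<subseteq> Qd" and cU: "card W < card U"
  shows "X \<noteq> {}"
proof
  assume X0: "X = {}"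
  have UV: "U \<subseteq> vecs n" using lin_subspaceD[OF U(1)] by auto
  have finU: "finite U" using UV finite_vecs finite_subset by blast
  have key: "u \<in> W" if "u \<in> U" "\<forall>w\<in>W. B u w = 0" for u
  proof (rule ccontr)
    assume "u \<notin> W"
    then have "u \<noteq> 0" using W0 by auto
    then have "u \<in> Qd" using U that by auto
    then have "u \<in> X" using \<open>u \<notin> W\<close> that by (simp add: X_iff)
    then show False using X0 by simp
  qed
  define T where "T = U \<inter> W"
  define \<phi> where "\<phi> u = (\<lambda>w. if w \<in> W then B u w else 0)" for u
  have \<phi>F: "\<phi> u \<in> funs W T" if "u \<in> U" for u
  proof (rule funsI)
    show "ext0 W (\<phi> u)" by (simp add: ext0_def \<phi>_def)
    show "\<phi> u (x + y) = \<phi> u x + \<phi> u y" if "x \<in> W" "y \<in> W" for x y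
      using that Wadd by (simp add: \<phi>_def polar_add_right)
    show "\<phi> u x = 0" if "x \<in> T" for x
      using that ts_B[OF U \<open>u \<in> U\<close>] by (simp add: \<phi>_def T_def)
  qed
  define r where "r f = (SOME v. v \<in> U \<and> \<phi> v = f)" for f
  have r: "r (\<phi> u) \<in> U \<and> \<phi> (r (\<phi> u)) = \<phi> u" if "u \<in> U" for u
    unfolding r_def by (rule someI[of _ u]) (use that in auto)
  define h where "h u = (u + r (\<phi> u), \<phi> u)" for u
  have "inj_on h U"
  proof
    fix u v assume "u \<in> U" "v \<in> U" "h u = h v"
    then show "u = v" by (auto simp: h_def)
  qed
  moreover have "h ` U \<subseteq> T \<times> funs W T"
  proof
    fix p assume "p \<in> h ` U"
    then obtain u where u: "u \<in> U" "p = h u" by auto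
    have ru: "r (\<phi> u) \<in> U" "\<phi> (r (\<phi> u)) = \<phi> u" using r[OF u(1)] by auto
    have "\<forall>w\<in>W. B (u + r (\<phi> u)) w = 0"
    proof
      fix w assume "w \<in> W"
      have "\<phi> (r (\<phi> u)) w = \<phi> u w" using ru(2) by simp
      then have "B (r (\<phi> u)) w = B u w" using \<open>w \<in> W\<close> by (simp add: \<phi>_def)
      then show "B (u + r (\<phi> u)) w = 0" by (simp add: polar_add_left)
    qed
    moreover have "u + r (\<phi> u) \<in> U" using lin_subspaceD(3)[OF U(1) u(1) ru(1)] .
    ultimately have "u + r (\<phi> u) \<in> T" using key by (auto simp: T_def)
    then show "p \<in> T \<times> funs W T" using u \<phi>F by (auto simp: h_def)
  qed
  ultimately have "card U \<le> card (T \<times> funs W T)"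
    using card_inj_on_le finite_funs[OF finW] finW by (metis finite_Int T_def finite_SigmaI)
  also have "\<dots> = card (funs W T) * card T" by (simp add: card_cartesian_product)
  also have "\<dots> \<le> card W"
    by (rule funs_count) (use finW W0 Wadd lin_subspaceD[OF U(1)] in \<open>auto simp: T_def\<close>)
  finally show False using cU by simp
qed

end



definition cone :: "'v set \<Rightarrow> ('v \<Rightarrow> 'v \<Rightarrow> bool) \<Rightarrow> 'v \<Rightarrow> bool" where
  "cone V E v \<longleftrightarrow> (\<forall>u\<in>V. E v u \<longrightarrow> (\<exists>w\<in>V. E v w \<and> E u w \<and>
      (\<forall>p\<in>V. E v p \<and> p \<noteq> u \<and> p \<noteq> w \<longrightarrow> (E u p \<longleftrightarrow> E w p))))"

lemma cone_iso:
  assumes "graph_iso V1 E1 V2 E2" "finite V1"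
  shows "card {v \<in> V1. cone V1 E1 v} = card {v \<in> V2. cone V2 E2 v}"
proof -
  obtain f where f: "bij_betw f V1 V2" and fE: "\<And>x y. x \<in> V1 \<Longrightarrow> y \<in> V1 \<Longrightarrow> E1 x y \<longleftrightarrow> E2 (f x) (f y)"
    using assms(1) unfolding graph_iso_def by blast
  have img: "f ` V1 = V2" using f by (simp add: bij_betw_def)
  have fV: "f x \<in> V2" if "x \<in> V1" for x using img that by blast
  have ex2: "(\<exists>y\<in>V2. P y) \<longleftrightarrow> (\<exists>x\<in>V1. P (f x))" for P using img by blast
  have all2: "(\<forall>y\<in>V2. P y) \<longleftrightarrow> (\<forall>x\<in>V1. P (f x))" for P using img by blast
  have inj: "x \<in> V1 \<Longrightarrow> y \<in> V1 \<Longrightarrow> f x = f y \<longleftrightarrow> x = y" for x y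
    using f by (auto simp: bij_betw_def inj_on_def)
  have c: "cone V1 E1 v \<longleftrightarrow> cone V2 E2 (f v)" if v: "v \<in> V1" for v
    unfolding cone_def all2 ex2
    apply (rule ball_cong[OF refl])
    apply (rule imp_cong[OF fE[OF v] ])
     apply assumption
    apply (rule bex_cong[OF refl])
    apply (rule conj_cong[OF fE[OF v]], assumption)
    apply (rule conj_cong[OF fE], assumption, assumption)
    apply (rule ball_cong[OF refl])
    using v by (simp add: fE inj)
  have "bij_betw f {v \<in> V1. cone V1 E1 v} {v \<in> V2. cone V2 E2 v}"
    unfolding bij_betw_def
  proof
    show "inj_on f {v \<in> V1. cone V1 E1 v}" using f by (auto simp: bij_betw_def inj_on_def)
    show "f ` {v \<in> V1. cone V1 E1 v} = {v \<in> V2. cone V2 E2 v}"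
      using c img by auto
  qed
  then show ?thesis by (rule bij_betw_same_card)
qed

context flag
begin

lemma X_shift: "x \<in> X \<Longrightarrow> w \<in> W \<Longrightarrow> x + w \<in> X"
proof -
  assume x: "x \<in> X" and w0: "w \<in> W"
  have xw: "x + w \<noteq> 0" using x w0 by (auto simp: X_iff fun_add_eq_0_iff)
  have "x + w \<notin> W" using x w0 Wadd[of "x+w" w] by (auto simp: X_iff add.assoc)
  moreover have "x + w \<in> Qd" using x w0 xw WV
    by (auto simp: X_iff quadric_iff qform_add W_q)
  moreover have "\<forall>w'\<in>W. B (x + w) w' = 0" using x w0 W_B by (auto simp: X_iff polar_add_left)
  ultimately show ?thesis by (simp add: X_iff)
qed

lemma QdV: "p \<in> Qd \<Longrightarrow> p \<in> vecs n" by (simp add: quadric_iff)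

lemma E1: "x \<in> Qd \<Longrightarrow> \<exists>y\<in>vecs n. B x y = 1"
  using ns unfolding nonsingular_def by (auto simp: quadric_iff zerov_0)

lemma sum_Qd: "x \<in> Qd \<Longrightarrow> y \<in> Qd \<Longrightarrow> B x y = 0 \<Longrightarrow> x \<noteq> y \<Longrightarrow> x + y \<in> Qd"
  by (auto simp: quadric_iff qform_add fun_add_eq_0_iff)

lemma add_eq_right_iff: "(x + y = (y::nat\<Rightarrow>bit)) \<longleftrightarrow> x = 0" by (metis add_0 add_right_cancel)
lemma add_eq_left_iff: "(x + y = (x::nat\<Rightarrow>bit)) \<longleftrightarrow> y = 0" by (metis add.right_neutral add_left_cancel)

lemma bit_add_eq_1: "(x::bit) + y = 1 \<longleftrightarrow> x \<noteq> y" by (cases x; cases y) simp_all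
lemma bit_add_eq_0: "(x::bit) + y = 0 \<longleftrightarrow> x = y" by (cases x; cases y) simp_all

lemma E2:
  assumes a1: "a1 \<in> Qd" and a2: "a2 \<in> Qd" and o: "B a1 a2 = 0" and d: "a1 \<noteq> a2"
  shows "\<exists>y\<in>vecs n. B y a1 = t1 \<and> B y a2 = t2"
proof -
  obtain y1 where y1: "y1 \<in> vecs n" "B y1 a1 = 1" using E1[OF a1] polar_comm by metis
  obtain y2 where y2: "y2 \<in> vecs n" "B y2 a2 = 1" using E1[OF a2] polar_comm by metis
  obtain y3 where y3: "y3 \<in> vecs n" "B y3 (a1 + a2) = 1" using E1[OF sum_Qd[OF a1 a2 o d]] polar_comm by metis
  have y3': "B y3 a1 \<noteq> B y3 a2" using y3(2) by (simp add: polar_add_right bit_add_eq_1)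
  have e10: "\<exists>y\<in>vecs n. B y a1 = 1 \<and> B y a2 = 0"
  proof (cases "B y1 a2 = 0")
    case True then show ?thesis using y1 by blast
  next
    case False
    then have y1': "B y1 a2 = 1" by simp
    show ?thesis
    proof (cases "B y3 a1 = 1")
      case True
      then show ?thesis using y3 y3' by (intro bexI[where x=y3]) auto
    next
      case False
      then have "B y3 a1 = 0" "B y3 a2 = 1" using y3' by auto
      then show ?thesis using y1 y1' y3
        by (intro bexI[where x="y1 + y3"]) (auto simp: polar_add_left)
    qed
  qed
  have e01: "\<exists>y\<in>vecs n. B y a1 = 0 \<and> B y a2 = 1"
  proof (cases "B y2 a1 = 0")
    case True then show ?thesis using y2 by blast
  next
    case False
    then have y2': "B y2 a1 = 1" by simp
    show ?thesis
    proof (cases "B y3 a2 = 1")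
      case True
      then show ?thesis using y3 y3' by (intro bexI[where x=y3]) auto
    next
      case False
      then have "B y3 a2 = 0" "B y3 a1 = 1" using y3' by auto
      then show ?thesis using y2 y2' y3
        by (intro bexI[where x="y2 + y3"]) (auto simp: polar_add_left)
    qed
  qed
  obtain e1 where e1: "e1 \<in> vecs n" "B e1 a1 = 1" "B e1 a2 = 0" using e10 by blast
  obtain e2 where e2: "e2 \<in> vecs n" "B e2 a1 = 0" "B e2 a2 = 1" using e01 by blast
  show ?thesis
  proof (cases t1; cases t2)
    assume "t1 = 0" "t2 = 0" then show ?thesis by (intro bexI[where x=0]) auto
  next
    assume "t1 = 0" "t2 = 1" then show ?thesis using e2 by blast
  next
    assume "t1 = 1" "t2 = 0" then show ?thesis using e1 by blast
  next
    assume "t1 = 1" "t2 = 1" then show ?thesis using e1 e2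
      by (intro bexI[where x="e1 + e2"]) (auto simp: polar_add_left)
  qed
qed

lemma E3:
  assumes a1: "a1 \<in> Qd" and a2: "a2 \<in> Qd" and a3: "a3 \<in> Qd"
    and o12: "B a1 a2 = 0" and o13: "B a1 a3 = 0" and o23: "B a2 a3 = 0"
    and d12: "a1 \<noteq> a2" and d13: "a1 \<noteq> a3" and d23: "a2 \<noteq> a3" and d123: "a1 + a2 \<noteq> a3"
  shows "\<exists>y\<in>vecs n. B y a1 = t1 \<and> B y a2 = t2 \<and> B y a3 = t3"
proof -
  obtain e1 where e1: "e1 \<in> vecs n" "B e1 a1 = 1" "B e1 a2 = 0" using E2[OF a1 a2 o12 d12] by blast
  obtain e2 where e2: "e2 \<in> vecs n" "B e2 a1 = 0" "B e2 a2 = 1" using E2[OF a1 a2 o12 d12] by blast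
  define r where "r = a3 + (if B e1 a3 = 1 then a1 else 0) + (if B e2 a3 = 1 then a2 else 0)"
  have q31: "a3 + a1 \<in> Qd" using sum_Qd[OF a3 a1] o13 d13 polar_comm by metis
  have q32: "a3 + a2 \<in> Qd" using sum_Qd[OF a3 a2] o23 d23 polar_comm by metis
  have q312: "a3 + a1 + a2 \<in> Qd"
  proof (rule sum_Qd[OF q31 a2])
    show "B (a3 + a1) a2 = 0" using o12 o23 polar_comm[of n a a3 a2] by (simp add: polar_add_left)
    show "a3 + a1 \<noteq> a2"
    proof
      assume "a3 + a1 = a2"
      then have "a1 + a2 = a3" by (metis add.commute fun_add_cancel_left)
      then show False using d123 by simp
    qed
  qed
  have rQ: "r \<in> Qd" unfolding r_def using a3 q31 q32 q312 by (auto simp: add.assoc)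
  obtain x where x: "x \<in> vecs n" "B x r = 1" using E1[OF rQ] polar_comm by metis
  define z where "z = x + (if B x a1 = 1 then e1 else 0) + (if B x a2 = 1 then e2 else 0)"
  have zV: "z \<in> vecs n" unfolding z_def using x e1 e2 by auto
  have za1: "B z a1 = 0" unfolding z_def using e1 e2
    by (cases "B x a1"; cases "B x a2") (simp_all add: polar_add_left)
  have za2: "B z a2 = 0" unfolding z_def using e1 e2
    by (cases "B x a1"; cases "B x a2") (simp_all add: polar_add_left)
  have xr: "B x r = B x a3 + (if B e1 a3 = 1 then B x a1 else 0) + (if B e2 a3 = 1 then B x a2 else 0)"
    unfolding r_def by (simp add: polar_add_right)
  have za3: "B z a3 = 1" using x(2) unfolding xr z_def
    by (cases "B x a1"; cases "B x a2"; cases "B e1 a3"; cases "B e2 a3") (simp_all add: polar_add_left)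
  obtain y0 where y0: "y0 \<in> vecs n" "B y0 a1 = t1" "B y0 a2 = t2" using E2[OF a1 a2 o12 d12] by blast
  show ?thesis
  proof (cases "B y0 a3 = t3")
    case True then show ?thesis using y0 by blast
  next
    case False
    then have "B (y0 + z) a3 = t3" using za3 by (cases t3; cases "B y0 a3") (simp_all add: polar_add_left)
    then show ?thesis using y0 zV za1 za2 by (intro bexI[where x="y0 + z"]) (auto simp: polar_add_left)
  qed
qed

lemma SF:
  assumes e: "e \<in> Qd" and y: "y \<in> vecs n" and ye: "B y e = 1" and eS: "\<And>x. x \<in> S \<Longrightarrow> B e x = 0"
  shows "\<exists>p\<in>Qd. \<forall>x\<in>S. B p x = B y x"
proof (cases "qform n a y = 0")
  case True
  have "y \<noteq> 0" using ye by auto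
  then show ?thesis using True y by (auto simp: quadric_iff)
next
  case False
  have eq: "qform n a e = 0" "e \<in> vecs n" using e by (auto simp: quadric_iff)
  have q: "qform n a (y + e) = 0" using False ye eq by (simp add: qform_add)
  have "y + e \<noteq> 0" using ye by (auto simp: fun_add_eq_0_iff)
  then have "y + e \<in> Qd" using q y eq by (auto simp: quadric_iff)
  then show ?thesis using eS by (intro bexI[where x="y + e"]) (auto simp: polar_add_left)
qed

abbreviation "G \<equiv> gamma_adj n a (W - {0})"

lemma W_notXZ: "p \<in> W \<Longrightarrow> p \<notin> X \<and> p \<notin> Z"
  by (auto simp: X_iff Z_def W_B)

lemma X_notZ: "p \<in> X \<Longrightarrow> p \<notin> Z"
  by (auto simp: X_iff Z_def)

lemma shift_types:
  assumes u: "u \<in> Qd" and v: "v \<in> W" and uv: "u + v \<in> Qd"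
  shows "u + v \<in> X \<longleftrightarrow> u \<in> X" "u + v \<in> Z \<longleftrightarrow> u \<in> Z"
proof -
  have w1: "u + v \<in> W \<longleftrightarrow> u \<in> W" using Wadd[of "u+v" v] Wadd[of u v] v by (auto simp: add.assoc)
  have w2: "B (u + v) w = B u w" if "w \<in> W" for w using W_B[OF v that] by (simp add: polar_add_left)
  show "u + v \<in> X \<longleftrightarrow> u \<in> X" using u uv w1 w2 by (simp add: X_iff)
  show "u + v \<in> Z \<longleftrightarrow> u \<in> Z" using u uv w2 by (simp add: Z_def)
qed

lemma cone_A:
  assumes Xne: "X \<noteq> {}" and v: "v \<in> W" "v \<noteq> 0"
  shows "cone Qd G v"
  unfolding cone_def
proof (intro ballI impI)
  fix u assume u: "u \<in> Qd" and Gvu: "G v u"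
  have vQ: "v \<in> Qd" using v tsW by auto
  have vt: "v \<notin> X" "v \<notin> Z" using W_notXZ[OF v(1)] by auto
  have uv: "v \<noteq> u" "B v u = 0" using Gvu gadj[OF Xne vQ u] vt by auto
  define w where "w = u + v"
  have wQ: "w \<in> Qd" unfolding w_def using sum_Qd[OF u vQ] uv polar_comm by metis
  have ty: "w \<in> X \<longleftrightarrow> u \<in> X" "w \<in> Z \<longleftrightarrow> u \<in> Z" using shift_types[OF u v(1)] wQ by (auto simp: w_def)
  have u0: "u \<noteq> 0" using u by (simp add: quadric_iff)
  have Gvw: "G v w"
  proof -
    have "v \<noteq> w" using u0 unfolding w_def by (metis add.commute add.right_neutral fun_add_cancel_left)
    moreover have "B v w = 0" using uv by (simp add: w_def polar_add_right)
    ultimately show ?thesis using gadj[OF Xne vQ wQ] vt by auto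
  qed
  have Guw: "G u w"
  proof -
    have "u \<noteq> w" using v(2) unfolding w_def by (metis add.right_neutral fun_add_cancel_left)
    moreover have "B u w = 0" using uv polar_comm[of n a u v] by (simp add: w_def polar_add_right)
    moreover have "u \<notin> Z \<or> u \<notin> X" using X_notZ by blast
    ultimately show ?thesis using gadj[OF Xne u wQ] ty by auto
  qed
  have "G u p \<longleftrightarrow> G w p" if p: "p \<in> Qd" "G v p" "p \<noteq> u" "p \<noteq> w" for p
  proof -
    have "B v p = 0" using p gadj[OF Xne vQ p(1)] vt by auto
    then have "B w p = B u p" by (simp add: w_def polar_add_left)
    then show ?thesis using gadj[OF Xne u p(1)] gadj[OF Xne wQ p(1)] ty p by auto
  qed
  then show "\<exists>w\<in>Qd. G v w \<and> G u w \<and> (\<forall>p\<in>Qd. G v p \<and> p \<noteq> u \<and> p \<noteq> w \<longrightarrow> (G u p \<longleftrightarrow> G w p))"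
    using wQ Gvw Guw by blast
qed

lemma card2_W: assumes "card W = 2" obtains v where "W = {0, v}" "v \<noteq> 0"
proof -
  have "card (W - {0}) = 1" using assms W0 finW by (simp add: card_Diff_singleton)
  then obtain v where "W - {0} = {v}" by (auto simp: card_Suc_eq)
  then show ?thesis using that W0 by blast
qed

lemma cone_B:
  assumes Xne: "X \<noteq> {}" and cW: "card W = 2" and c: "c \<in> Qd"
  shows "cone Qd G c"
proof -
  obtain v where Wv: "W = {0, v}" and v0: "v \<noteq> 0" using card2_W[OF cW] by blast
  have vW: "v \<in> W" using Wv by simp
  have vQ: "v \<in> Qd" using vW v0 tsW by auto
  have inW: "p \<in> W \<longleftrightarrow> p = 0 \<or> p = v" for p using Wv by blast
  have allW: "(\<forall>w\<in>W. B p w = 0) \<longleftrightarrow> B p v = 0" for p using Wv by auto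
  have exW: "(\<exists>w\<in>W. B p w = 1) \<longleftrightarrow> B p v = 1" for p using Wv by auto
  have tX: "p \<in> X \<longleftrightarrow> p \<noteq> v \<and> B p v = 0" if "p \<in> Qd" for p
    using that unfolding X_iff inW allW by (auto simp: quadric_iff)
  have tZ: "p \<in> Z \<longleftrightarrow> B p v = 1" if "p \<in> Qd" for p
    using that unfolding Z_def exW by auto
  have Ev: "G p q \<longleftrightarrow> p \<noteq> q \<and> (if p = v then B q v = 0 else if q = v then B p v = 0 else B p q + B p v + B q v = 0)"
    if p: "p \<in> Qd" and q: "q \<in> Qd" for p q
  proof -
    have gg: "G p q \<longleftrightarrow> ((p \<noteq> q \<and> B p q = 0) \<noteq> ((p \<in> Z \<and> q \<in> X) \<or> (p \<in> X \<and> q \<in> Z)))"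
      by (rule gadj[OF Xne p q])
    show ?thesis
    proof (cases "p = v")
      case True then show ?thesis using gg tZ[OF q] tX[OF q] vQ polar_comm[of n a v q] by (auto simp: tZ tX)
    next
      case pv: False
      show ?thesis
      proof (cases "q = v")
        case True then show ?thesis using gg tZ[OF p] tX[OF p] pv by (auto simp: tZ tX vQ)
      next
        case qv: False
        show ?thesis using gg tZ[OF p] tX[OF p] tZ[OF q] tX[OF q] pv qv
          by (cases "B p v"; cases "B q v"; cases "B p q") auto
      qed
    qed
  qed
  show ?thesis
  proof (cases "c = v")
    case True then show ?thesis using cone_A[OF Xne vW v0] by simp
  next
    case cv: False
    show ?thesis
      unfolding cone_def
    proof (intro ballI impI)
      fix u assume u: "u \<in> Qd" and Gcu: "G c u"
      have c0: "c \<noteq> 0" and u0: "u \<noteq> 0" using c u by (auto simp: quadric_iff)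
      have Ecu: "c \<noteq> u" "if u = v then B c v = 0 else B c u + B c v + B u v = 0"
        using Gcu Ev[OF c u] cv by auto
      have cm: "B v c = B c v" "B v u = B u v" "B u c = B c u" "B c v = B v c \<Longrightarrow> True"
        by (simp_all add: polar_comm)
      have cVec: "c \<in> vecs n" "u \<in> vecs n" "v \<in> vecs n" using c u vQ by (auto simp: quadric_iff)
      have qs: "qform n a c = 0" "qform n a u = 0" "qform n a v = 0" using c u vQ by (auto simp: quadric_iff)
      consider "u = v" | "u \<noteq> v" "u = c + v" | "u \<noteq> v" "u \<noteq> c + v" by blast
      then show "\<exists>w\<in>Qd. G c w \<and> G u w \<and> (\<forall>p\<in>Qd. G c p \<and> p \<noteq> u \<and> p \<noteq> w \<longrightarrow> (G u p \<longleftrightarrow> G w p))"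
      proof cases
        case 1
        then have bcv: "B c v = 0" using Ecu by simp
        define w where "w = c + v"
        have wQ: "w \<in> Qd" unfolding w_def by (rule sum_Qd[OF c vQ bcv cv])
        have wv: "w \<noteq> v" unfolding w_def using c0 by (metis add.commute add.right_neutral fun_add_cancel_left)
        have wc: "w \<noteq> c" unfolding w_def using v0 by (metis add.right_neutral fun_add_cancel_left)
        have "G c w" using Ev[OF c wQ] wc wv cv bcv by (simp add: w_def polar_add_left polar_add_right)
        moreover have "G u w" using Ev[OF u wQ] 1 wv bcv by (simp add: w_def polar_add_left polar_add_right)
        moreover have "G u p \<longleftrightarrow> G w p" if p: "p \<in> Qd" "G c p" "p \<noteq> u" "p \<noteq> w" for p
        proof -
          have pv: "p \<noteq> v" using p 1 by simp
          have "B c p + B p v = 0" "c \<noteq> p" using Ev[OF c p(1)] p(2) pv cv bcv by auto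
          then show ?thesis using Ev[OF u p(1)] Ev[OF wQ p(1)] 1 pv wv p(4) bcv polar_comm[of n a v p]
            by (cases "B c p"; cases "B p v") (simp_all add: w_def polar_add_left)
        qed
        ultimately show ?thesis using wQ by blast
      next
        case 2
        then have bcv: "B c v = 0" using Ecu cm by (simp add: polar_add_left polar_add_right)
        have "G c v" using Ev[OF c vQ] cv bcv by simp
        moreover have "G u v" using Ev[OF u vQ] 2 bcv by (simp add: polar_add_left)
        moreover have "G u p \<longleftrightarrow> G v p" if p: "p \<in> Qd" "G c p" "p \<noteq> u" "p \<noteq> v" for p
        proof -
          have "B c p + B p v = 0" using Ev[OF c p(1)] p(2) p(4) cv bcv by auto
          then show ?thesis using Ev[OF u p(1)] Ev[OF vQ p(1)] 2 p bcv polar_comm[of n a v p]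
            by (cases "B c p"; cases "B p v") (simp_all add: polar_add_left)
        qed
        ultimately show ?thesis using vQ by blast
      next
        case 3
        have E3: "B c u + B c v + B u v = 0" using Ecu 3 by simp
        define w where "w = u + c + v"
        have uc0: "u + c \<noteq> 0" using Ecu by (simp add: fun_add_eq_0_iff)
        have w0: "w \<noteq> 0" unfolding w_def using 3 by (simp add: add.assoc fun_add_eq_0_iff)
        have qw: "qform n a w = 0" unfolding w_def using qs E3 cm
          by (cases "B c u"; cases "B c v"; cases "B u v") (simp_all add: qform_add polar_add_left)
        have wQ: "w \<in> Qd" using w0 qw cVec by (auto simp: quadric_iff w_def)
        have wv: "w \<noteq> v" unfolding w_def using uc0 by (simp add: add_eq_right_iff)
        have "w = c + (u + v)" unfolding w_def by (simp add: ac_simps)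
        then have wc: "w \<noteq> c" using 3 by (simp add: add_eq_left_iff fun_add_eq_0_iff)
        have "w = u + (c + v)" unfolding w_def by (simp add: ac_simps)
        then have wu: "w \<noteq> u" using cv by (simp add: add_eq_left_iff fun_add_eq_0_iff)
        have "G c w" using Ev[OF c wQ] wc wv cv E3 cm
          by (cases "B c u"; cases "B c v"; cases "B u v") (simp_all add: w_def polar_add_left polar_add_right)
        moreover have "G u w" using Ev[OF u wQ] wu wv 3 E3 cm
          by (cases "B c u"; cases "B c v"; cases "B u v") (simp_all add: w_def polar_add_left polar_add_right)
        moreover have "G u p \<longleftrightarrow> G w p" if p: "p \<in> Qd" "G c p" "p \<noteq> u" "p \<noteq> w" for p
        proof (cases "p = v")
          case True
          have "B c v = 0" using Ev[OF c p(1)] p(2) True cv by auto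
          then show ?thesis using Ev[OF u p(1)] Ev[OF wQ p(1)] True 3 wv
            by (simp add: w_def polar_add_left)
        next
          case pv: False
          have cp: "B c p + B c v + B p v = 0" using Ev[OF c p(1)] p(2) pv cv by auto
          show ?thesis using Ev[OF u p(1)] Ev[OF wQ p(1)] pv 3 wv p(3,4) cp cm
            polar_comm[of n a v p] polar_comm[of n a u p] polar_comm[of n a c p]
            by (cases "B p c"; cases "B p u"; cases "B p v"; cases "B c v"; cases "B u v")
               (simp_all add: w_def polar_add_left)
        qed
        ultimately show ?thesis using wQ by blast
      qed
    qed
  qed
qed

lemma three_W: assumes "card W \<ge> 4" shows "\<exists>a\<in>W. a \<noteq> 0 \<and> a \<noteq> q"
proof -
  have "card (W - {0, q}) \<ge> 2"
  proof -
    have "card W - card {0, q} \<le> card (W - {0, q})" by (rule diff_card_le_card_Diff) simp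
    moreover have "card {0, q} \<le> 2" by (simp add: card_insert_if)
    ultimately show ?thesis using assms by linarith
  qed
  then have "W - {0, q} \<noteq> {}" by (metis card.empty not_numeral_le_zero)
  then show ?thesis by blast
qed

lemma Gnf: "p \<in> Qd \<Longrightarrow> q \<in> Qd \<Longrightarrow> X \<noteq> {} \<Longrightarrow> \<not> ((p \<in> Z \<and> q \<in> X) \<or> (p \<in> X \<and> q \<in> Z)) \<Longrightarrow> G p q \<longleftrightarrow> p \<noteq> q \<and> B p q = 0"
  using gadj by auto
lemma Gf: "p \<in> Qd \<Longrightarrow> q \<in> Qd \<Longrightarrow> X \<noteq> {} \<Longrightarrow> ((p \<in> Z \<and> q \<in> X) \<or> (p \<in> X \<and> q \<in> Z)) \<Longrightarrow> G p q \<longleftrightarrow> B p q = 1"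
  using gadj X_notZ by fastforce

lemma cone_C:
  assumes Xne: "X \<noteq> {}" and cW: "card W \<ge> 4" and c: "c \<in> Qd" and cnW: "c \<notin> W"
  shows "\<not> cone Qd G c"
proof
  assume cone: "cone Qd G c"
  have Wq: "p \<in> W \<Longrightarrow> p \<noteq> 0 \<Longrightarrow> p \<in> Qd" for p using tsW by auto
  from c show False
  proof (cases rule: Qd_cases)
    case A then show ?thesis using cnW by simp
  next
    case X
    have cX: "c \<in> X" using X by simp
    obtain a0 where a0: "a0 \<in> W" "a0 \<noteq> 0" using three_W[OF cW] by blast
    have a0Q: "a0 \<in> Qd" using Wq a0 by blast
    have ca0: "B c a0 = 0" "c \<noteq> a0" using cX a0 by (auto simp: X_iff)
    obtain y where y: "y \<in> vecs n" "B y c = 1" "B y a0 = 1" using E2[OF c a0Q ca0] by blast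
    have "\<exists>p\<in>Qd. \<forall>x\<in>{c, a0}. B p x = B y x" by (rule SF[OF c y(1) y(2)]) (use ca0 in auto)
    then obtain u where u: "u \<in> Qd" "B u c = 1" "B u a0 = 1" using y by auto
    have uZ: "u \<in> Z" using u a0 by (auto simp: Z_def)
    have "G c u" using Gf[OF c u(1) Xne] cX uZ u(2) polar_comm[of n a c u] by simp
    then obtain w where w: "w \<in> Qd" "G c w" "G u w"
      and H: "\<And>p. p \<in> Qd \<Longrightarrow> G c p \<Longrightarrow> p \<noteq> u \<Longrightarrow> p \<noteq> w \<Longrightarrow> (G u p \<longleftrightarrow> G w p)"
      using cone u(1) unfolding cone_def by blast
    have Gca0: "G c a0" using Gnf[OF c a0Q Xne] ca0 W_notXZ[OF a0(1)] by simp
    have Gua0: "\<not> G u a0" using Gnf[OF u(1) a0Q Xne] u W_notXZ[OF a0(1)] by simp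
    have a0u: "a0 \<noteq> u" using uZ W_notXZ[OF a0(1)] by auto
    from w(1) show False
    proof (cases rule: Qd_cases)
      case A
      have "B u w = 0" using w(3) Gnf[OF u(1) w(1) Xne] A by simp
      then have "a0 \<noteq> w" using u(3) by auto
      moreover have "G w a0" using Gnf[OF w(1) a0Q Xne] A W_notXZ[OF a0(1)] W_B[OF A(1) a0(1)] \<open>a0 \<noteq> w\<close> by auto
      ultimately show False using H[OF a0Q Gca0 a0u] Gua0 by blast
    next
      case X
      have "a0 \<noteq> w" using X a0 by auto
      moreover have "G w a0" using Gnf[OF w(1) a0Q Xne] X W_notXZ[OF a0(1)] a0 \<open>a0 \<noteq> w\<close> by (auto simp: X_iff)
      ultimately show False using H[OF a0Q Gca0 a0u] Gua0 by blast
    next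
      case Z
      have Bcw: "B c w = 1" using w(2) Gf[OF c w(1) Xne] cX Z by simp
      have uw: "u \<noteq> w" "B u w = 0" using w(3) Gnf[OF u(1) w(1) Xne] uZ Z X_notZ by auto
      define d where "d = u + w"
      have dQ: "d \<in> Qd" unfolding d_def by (rule sum_Qd[OF u(1) w(1) uw(2) uw(1)])
      have dW: "B d p = 0" if "p \<in> W" for p
      proof (cases "p = 0")
        case True then show ?thesis by simp
      next
        case False
        have pQ: "p \<in> Qd" using Wq that False by blast
        have "G c p" using Gnf[OF c pQ Xne] W_notXZ[OF that] cX that False by (auto simp: X_iff)
        moreover have "p \<noteq> u" "p \<noteq> w" using that uZ Z W_notXZ by auto
        ultimately have "G u p \<longleftrightarrow> G w p" using H[OF pQ] by blast
        moreover have "G u p \<longleftrightarrow> B u p = 0" "G w p \<longleftrightarrow> B w p = 0"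
          using Gnf[OF u(1) pQ Xne] Gnf[OF w(1) pQ Xne] W_notXZ[OF that] \<open>p \<noteq> u\<close> \<open>p \<noteq> w\<close> by auto
        ultimately show ?thesis unfolding d_def polar_add_left by (cases "B u p"; cases "B w p") auto
      qed
      have dc: "B c d = 0" using u(2) Bcw polar_comm[of n a c u] by (simp add: d_def polar_add_right)
      have ud: "B u d = 0" "B w d = 0" using uw polar_comm[of n a w u] by (simp_all add: d_def polar_add_right)
      have "\<exists>p\<in>Qd. B p c = 1 \<and> B p d = 1 \<and> p \<in> Z"
      proof (cases "d \<in> W")
        case True
        have "c \<noteq> d" using True cnW by auto
        then obtain y where y: "y \<in> vecs n" "B y c = 1" "B y d = 1" using E2[OF c dQ dc] by blast
        have "B c c = 0" by simp
        have "\<exists>p\<in>Qd. \<forall>x\<in>{c, d}. B p x = B y x" by (rule SF[OF c y(1) y(2)]) (use dc in auto)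
        then obtain p where "p \<in> Qd" "B p c = 1" "B p d = 1" using y by auto
        then show ?thesis using True by (auto simp: Z_def)
      next
        case False
        have dX: "\<forall>w\<in>W. B d w = 0" using dW by blast
        have cd: "c \<noteq> d"
        proof
          assume "c = d"
          then have "w = u + c" unfolding d_def by simp
          then have "qform n a w = 1" using u c by (simp add: qform_add quadric_iff polar_comm[of n a u c])
          then show False using w(1) by (simp add: quadric_iff)
        qed
        obtain a' where a': "a' \<in> W" "a' \<noteq> 0" "a' \<noteq> c + d" using three_W[OF cW] by blast
        have a'Q: "a' \<in> Qd" using Wq a' by blast
        have o: "B c a' = 0" "B d a' = 0" using cX a' dX by (auto simp: X_iff)
        have ne: "c \<noteq> a'" "d \<noteq> a'" using cnW False a' by auto
        obtain y where y: "y \<in> vecs n" "B y c = 1" "B y d = 1" "B y a' = 1"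
          using E3[OF c dQ a'Q dc o(1) o(2) cd ne(1) ne(2) a'(3)[symmetric]] by blast
        have "\<exists>p\<in>Qd. \<forall>x\<in>{c, d, a'}. B p x = B y x" by (rule SF[OF c y(1) y(2)]) (use dc o in auto)
        then obtain p where "p \<in> Qd" "B p c = 1" "B p d = 1" "B p a' = 1" using y by auto
        then show ?thesis using a' by (auto simp: Z_def)
      qed
      then obtain p where p: "p \<in> Qd" "B p c = 1" "B p d = 1" "p \<in> Z" by blast
      have Gcp: "G c p" using Gf[OF c p(1) Xne] cX p polar_comm[of n a c p] by simp
      have pu: "p \<noteq> u" "p \<noteq> w" using p ud by auto
      have "G u p \<longleftrightarrow> G w p" using H[OF p(1) Gcp pu] .
      moreover have "G u p \<longleftrightarrow> B u p = 0" "G w p \<longleftrightarrow> B w p = 0"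
        using Gnf[OF u(1) p(1) Xne] Gnf[OF w(1) p(1) Xne] uZ Z p(4) pu X_notZ by auto
      moreover have "B u p + B w p = 1" using p(3) polar_comm[of n a p d] by (simp add: d_def polar_add_left)
      ultimately show False by (cases "B u p"; cases "B w p") auto
    qed
  next
    case Z
    have cZ: "c \<in> Z" using Z by simp
    obtain ac where ac: "ac \<in> W" "B c ac = 1" using cZ by (auto simp: Z_def)
    obtain a1 where a1: "a1 \<in> W" "a1 \<noteq> 0" using three_W[OF cW] by blast
    obtain a2 where a2: "a2 \<in> W" "a2 \<noteq> 0" "a2 \<noteq> a1" using three_W[OF cW] by blast
    have "\<exists>b0\<in>W. b0 \<noteq> 0 \<and> B c b0 = 0"
    proof (cases "B c a1 = 0")
      case True then show ?thesis using a1 by blast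
    next
      case F1: False
      show ?thesis
      proof (cases "B c a2 = 0")
        case True then show ?thesis using a2 by blast
      next
        case False
        have "a1 + a2 \<in> W" "a1 + a2 \<noteq> 0" "B c (a1 + a2) = 0"
          using Wadd[OF a1(1) a2(1)] a2(3) F1 False by (auto simp: fun_add_eq_0_iff polar_add_right)
        then show ?thesis by blast
      qed
    qed
    then obtain b0 where b0: "b0 \<in> W" "b0 \<noteq> 0" "B c b0 = 0" by blast
    have aQ: "b0 \<in> Qd" using Wq b0 by blast
    have ca: "c \<noteq> b0" using cnW b0 by auto
    obtain x0 where x0: "x0 \<in> X" using Xne by blast
    have "\<exists>x\<in>X. B c x = 1"
    proof (cases "B c x0 = 1")
      case True then show ?thesis using x0 by blast
    next
      case False
      have "B c (x0 + ac) = 1" using False ac by (simp add: polar_add_right)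
      then show ?thesis using X_shift[OF x0 ac(1)] by blast
    qed
    then obtain x1 where x1: "x1 \<in> X" "B c x1 = 1" by blast
    have x1Q: "x1 \<in> Qd" using x1 by (simp add: X_iff)
    obtain y where y: "y \<in> vecs n" "B y c = 0" "B y b0 = 1" using E2[OF c aQ b0(3) ca] by blast
    have aa: "B b0 b0 = 0" "B b0 c = 0" using b0(3) polar_comm[of n a b0 c] by simp_all
    have "\<exists>p\<in>Qd. \<forall>x\<in>{c, b0}. B p x = B y x" by (rule SF[OF aQ y(1) y(3)]) (use aa in auto)
    then obtain u where u: "u \<in> Qd" "B u c = 0" "B u b0 = 1" using y by auto
    have uZ: "u \<in> Z" using u b0 by (auto simp: Z_def)
    have uc: "u \<noteq> c" using u b0 by auto
    have "G c u" using Gnf[OF c u(1) Xne] cZ uZ X_notZ uc u(2) polar_comm[of n a c u] by auto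
    then obtain w where w: "w \<in> Qd" "G c w" "G u w"
      and H: "\<And>p. p \<in> Qd \<Longrightarrow> G c p \<Longrightarrow> p \<noteq> u \<Longrightarrow> p \<noteq> w \<Longrightarrow> (G u p \<longleftrightarrow> G w p)"
      using cone u(1) unfolding cone_def by blast
    have Gca: "G c b0" using Gnf[OF c aQ Xne] b0 ca W_notXZ[OF b0(1)] by simp
    have Gua: "\<not> G u b0" using Gnf[OF u(1) aQ Xne] u W_notXZ[OF b0(1)] by simp
    have au: "b0 \<noteq> u" using uZ W_notXZ[OF b0(1)] by auto
    from w(1) show False
    proof (cases rule: Qd_cases)
      case A
      have "B u w = 0" using w(3) Gnf[OF u(1) w(1) Xne] A by simp
      then have "b0 \<noteq> w" using u(3) by auto
      moreover have "G w b0" using Gnf[OF w(1) aQ Xne] A W_notXZ[OF b0(1)] W_B[OF A(1) b0(1)] \<open>b0 \<noteq> w\<close> by auto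
      ultimately show False using H[OF aQ Gca au] Gua by blast
    next
      case X
      have "b0 \<noteq> w" using X b0 by auto
      moreover have "G w b0" using Gnf[OF w(1) aQ Xne] X W_notXZ[OF b0(1)] b0 \<open>b0 \<noteq> w\<close> by (auto simp: X_iff)
      ultimately show False using H[OF aQ Gca au] Gua by blast
    next
      case Z
      have cw: "c \<noteq> w" "B c w = 0" using w(2) Gnf[OF c w(1) Xne] cZ Z X_notZ by auto
      have uw: "u \<noteq> w" "B u w = 0" using w(3) Gnf[OF u(1) w(1) Xne] uZ Z X_notZ by auto
      define d where "d = u + w"
      have dQ: "d \<in> Qd" unfolding d_def by (rule sum_Qd[OF u(1) w(1) uw(2) uw(1)])
      have Hd: "B d p = 0" if p: "p \<in> Qd" "G c p" "p \<noteq> u" "p \<noteq> w" for p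
      proof -
        have "G u p \<longleftrightarrow> G w p" using H[OF p] .
        moreover have "G u p \<longleftrightarrow> ((u \<noteq> p \<and> B u p = 0) \<noteq> (p \<in> X))" "G w p \<longleftrightarrow> ((w \<noteq> p \<and> B w p = 0) \<noteq> (p \<in> X))"
          using gadj[OF Xne u(1) p(1)] gadj[OF Xne w(1) p(1)] uZ Z X_notZ by auto
        ultimately show ?thesis using p(3,4) unfolding d_def polar_add_left by (cases "B u p"; cases "B w p") auto
      qed
      have ud: "B u d = 0" "B w d = 0" using uw polar_comm[of n a w u] by (simp_all add: d_def polar_add_right)
      show False
      proof (cases "d = c")
        case True
        have "G c x1" using Gf[OF c x1Q Xne] cZ x1 by simp
        moreover have "x1 \<noteq> u" "x1 \<noteq> w" using x1 uZ Z X_notZ by auto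
        ultimately have "B d x1 = 0" using Hd[OF x1Q] by blast
        then show False using True x1(2) by simp
      next
        case dc: False
        have Bcd: "B c d = 0" using u(2) cw polar_comm[of n a c u] by (simp add: d_def polar_add_right)
        have aneq: "b0 \<noteq> w" using b0 Z W_notXZ by auto
        have Bda: "B d b0 = 0" using Hd[OF aQ Gca au aneq] .
        have wud: "w = u + d" unfolding d_def by simp
        have qa: "qform n a b0 = 0" "qform n a u = 0" "qform n a c = 0" using aQ u(1) c by (auto simp: quadric_iff)
        have da: "d \<noteq> b0"
        proof
          assume "d = b0"
          then have "qform n a w = 1" using wud qa u(3) by (simp add: qform_add)
          then show False using w(1) by (simp add: quadric_iff)
        qed
        have cda: "c + d \<noteq> b0"
        proof
          assume "c + d = b0"
          then have "d = c + b0" by (metis fun_add_cancel_left)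
          then have "qform n a w = 1" using wud qa u(2,3) b0(3) polar_comm[of n a u c]
            by (simp add: qform_add polar_add_right polar_add_left)
          then show False using w(1) by (simp add: quadric_iff)
        qed
        obtain y where y: "y \<in> vecs n" "B y c = 0" "B y d = 1" "B y b0 = 1"
          using E3[OF c dQ aQ Bcd b0(3) Bda dc[symmetric] ca da cda] by blast
        have aS: "B b0 c = 0" "B b0 d = 0" "B b0 b0 = 0" using b0(3) Bda polar_comm[of n a b0 c] polar_comm[of n a b0 d] by simp_all
        have "\<exists>p\<in>Qd. \<forall>x\<in>{c, d, b0}. B p x = B y x" by (rule SF[OF aQ y(1) y(4)]) (use aS in auto)
        then obtain p where p: "p \<in> Qd" "B p c = 0" "B p d = 1" "B p b0 = 1" using y by auto
        have pZ: "p \<in> Z" using p b0 by (auto simp: Z_def)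
        have pc: "p \<noteq> c" using p Bcd by auto
        have pu: "p \<noteq> u" "p \<noteq> w" using p ud by auto
        have "G c p" using Gnf[OF c p(1) Xne] cZ pZ X_notZ pc p(2) polar_comm[of n a c p] by auto
        then have "B d p = 0" using Hd[OF p(1) _ pu] by blast
        then show False using p(3) polar_comm[of n a d p] by simp
      qed
    qed
  qed
qed

end



context flag
begin

lemma cone_card:
  assumes Xne: "X \<noteq> {}"
  shows "card {v \<in> Qd. cone Qd G v} = (if s = 0 then card Qd else 2 ^ (s + 1) - 1)"
proof (cases "s = 0")
  case True
  then have "card W = 2" using cardW by simp
  then have "{v \<in> Qd. cone Qd G v} = Qd" using cone_B[OF Xne] by blast
  then show ?thesis using True by simp
next
  case False
  have c4: "card W \<ge> 4"
  proof -
    have "(2::nat) ^ 2 \<le> 2 ^ (s + 1)" using False by (intro power_increasing) auto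
    then show ?thesis using cardW by simp
  qed
  have "{v \<in> Qd. cone Qd G v} = W - {0}"
  proof
    show "{v \<in> Qd. cone Qd G v} \<subseteq> W - {0}"
    proof
      fix v assume v: "v \<in> {v \<in> Qd. cone Qd G v}"
      then have "v \<in> W" using cone_C[OF Xne c4] by blast
      moreover have "v \<noteq> 0" using v by (simp add: quadric_iff)
      ultimately show "v \<in> W - {0}" by simp
    qed
    show "W - {0} \<subseteq> {v \<in> Qd. cone Qd G v}" using cone_A[OF Xne] tsW by blast
  qed
  moreover have "card (W - {0}) = 2 ^ (s + 1) - 1" using cardW W0 finW by (simp add: card_Diff_singleton)
  ultimately show ?thesis using False by simp
qed

end

lemma proj_subspaceE:
  assumes "proj_subspace n s S"
  obtains W where "lin_subspace n W" "card W = 2 ^ (s + 1)" "S = W - {0}"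
  using assms unfolding proj_subspace_def zerov_0 by blast

theorem theorem6p2:
  fixes n g s t :: nat and a :: "nat \<Rightarrow> nat \<Rightarrow> bit"
    and \<alpha> \<beta> :: "(nat \<Rightarrow> bit) set"
  assumes "nonsingular n a"
    and "has_proj_index n a g" and "1 \<le> g"
    and "s < g" and "t < g" and "s \<noteq> t"
    and "proj_subspace n s \<alpha>" and "\<alpha> \<subseteq> quadric n a"
    and "proj_subspace n t \<beta>" and "\<beta> \<subseteq> quadric n a"
  shows "\<not> graph_iso (quadric n a) (gamma_adj n a \<alpha>) (quadric n a) (gamma_adj n a \<beta>)"
proof
  assume iso: "graph_iso (quadric n a) (gamma_adj n a \<alpha>) (quadric n a) (gamma_adj n a \<beta>)"
  obtain S where S: "proj_subspace n g S" "S \<subseteq> quadric n a" using assms(2) unfolding has_proj_index_def by blast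
  obtain U where U: "lin_subspace n U" "card U = 2 ^ (g + 1)" "S = U - {0}" using S(1) by (rule proj_subspaceE)
  obtain W1 where W1: "lin_subspace n W1" "card W1 = 2 ^ (s + 1)" "\<alpha> = W1 - {0}" using assms(7) by (rule proj_subspaceE)
  obtain W2 where W2: "lin_subspace n W2" "card W2 = 2 ^ (t + 1)" "\<beta> = W2 - {0}" using assms(9) by (rule proj_subspaceE)
  interpret f1: flag n a W1 s using assms(1,8) W1 by unfold_locales auto
  interpret f2: flag n a W2 t using assms(1,10) W2 by unfold_locales auto
  have US: "U - {0} \<subseteq> quadric n a" using S U by simp
  have lt1: "card W1 < card U" using W1 U assms(4) by (simp add: power_strict_increasing)
  have lt2: "card W2 < card U" using W2 U assms(5) by (simp add: power_strict_increasing)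
  have X1: "f1.X \<noteq> {}" by (rule f1.X_nonempty[OF U(1) US lt1])
  have X2: "f2.X \<noteq> {}" by (rule f2.X_nonempty[OF U(1) US lt2])
  have eq: "card {v \<in> quadric n a. cone (quadric n a) (gamma_adj n a \<alpha>) v} =
            card {v \<in> quadric n a. cone (quadric n a) (gamma_adj n a \<beta>) v}"
    by (rule cone_iso[OF iso f1.finQ])
  have c1: "card {v \<in> quadric n a. cone (quadric n a) (gamma_adj n a \<alpha>) v} = (if s = 0 then card (quadric n a) else 2 ^ (s + 1) - 1)"
    using f1.cone_card[OF X1] W1(3) by simp
  have c2: "card {v \<in> quadric n a. cone (quadric n a) (gamma_adj n a \<beta>) v} = (if t = 0 then card (quadric n a) else 2 ^ (t + 1) - 1)"
    using f2.cone_card[OF X2] W2(3) by simp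
  have "card (U - {0}) \<le> card (quadric n a)" using US f1.finQ by (rule card_mono[rotated])
  moreover have "card (U - {0}) = 2 ^ (g + 1) - 1"
  proof -
    have "finite U" using lin_subspaceD(1)[OF U(1)] finite_vecs by (rule finite_subset)
    then show ?thesis using U(2) lin_subspaceD(2)[OF U(1)] by (simp add: card_Diff_singleton)
  qed
  ultimately have bigQ: "2 ^ (g + 1) - 1 \<le> card (quadric n a)" by simp
  have mono: "(2::nat) ^ (x + 1) - 1 < 2 ^ (g + 1) - 1" if "x < g" for x
  proof -
    have "(2::nat) ^ (x + 1) < 2 ^ (g + 1)" using that by (simp add: power_strict_increasing)
    moreover have "(1::nat) \<le> 2 ^ (x + 1)" by simp
    ultimately show ?thesis by linarith
  qed
  show False
  proof (cases "s = 0")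
    case True
    then have "t \<noteq> 0" using assms(6) by simp
    then show False using eq c1 c2 True bigQ mono[OF assms(5)] by simp
  next
    case sF: False
    show False
    proof (cases "t = 0")
      case True
      then show False using eq c1 c2 sF bigQ mono[OF assms(4)] by simp
    next
      case False
      then have "(2::nat) ^ (s + 1) - 1 = 2 ^ (t + 1) - 1" using eq c1 c2 sF by simp
      then have "(2::nat) ^ (s + 1) = 2 ^ (t + 1)"
      proof -
        have "(1::nat) \<le> 2 ^ (s + 1)" "(1::nat) \<le> 2 ^ (t + 1)" by simp_all
        then show ?thesis using \<open>(2::nat) ^ (s + 1) - 1 = 2 ^ (t + 1) - 1\<close> by linarith
      qed
      then have "s + 1 = t + 1" by (simp add: power_inject_exp)
      then show False using assms(6) by simp
    qed
  qed
qed


end
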